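(* Let $G$ be a connected $\mathrm{NP}_1$-digital topological group with identity $e$, and let $S$ be the set of points of $G$ adjacent to $e$. Then $S$ generates $G$ as a group, and $G$ is the Cayley graph $\Gamma(G,S)$.
   Context: A digital image is a finite set with a reflexive symmetric adjacency relation (a finite reflexive graph); continuous maps send adjacent points to adjacent points; connected means graph-connected. On $G\times G$, $\mathrm{NP}_1$ declares $(a,b)\sim(c,d)$ iff either $a=c$ and $b\sim d$, or $b=d$ and $a\sim c$. An $\mathrm{NP}_1$-digital topological group is a digital image $G$ with a group structure whose multiplication is $\mathrm{NP}_1$-continuous and whose inversion is continuous. For a finite group $G$ and $S\subseteq G$, the Cayley graph $\Gamma(G,S)$ has vertex set $G$ and $a\sim b$ iff $ab^{-1}\in S$ or $ba^{-1}\in S$. *)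

theory Defs
  imports "HOL-Algebra.Generated_Groups"
begin

definition digital_image :: "'a set \<Rightarrow> ('a \<Rightarrow> 'a \<Rightarrow> bool) \<Rightarrow> bool" where
  "digital_image X adj \<longleftrightarrow> finite X \<and> (\<forall>x\<in>X. adj x x)
     \<and> (\<forall>x\<in>X. \<forall>y\<in>X. adj x y \<longrightarrow> adj y x)"

definition digitally_continuous ::
  "'a set \<Rightarrow> ('a \<Rightarrow> 'a \<Rightarrow> bool) \<Rightarrow> 'b set \<Rightarrow> ('b \<Rightarrow> 'b \<Rightarrow> bool) \<Rightarrow> ('a \<Rightarrow> 'b) \<Rightarrow> bool" where
  "digitally_continuous X adjX Y adjY f \<longleftrightarrow> (\<forall>x\<in>X. f x \<in> Y)
     \<and> (\<forall>x\<in>X. \<forall>y\<in>X. adjX x y \<longrightarrow> adjY (f x) (f y))"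

definition digitally_connected :: "'a set \<Rightarrow> ('a \<Rightarrow> 'a \<Rightarrow> bool) \<Rightarrow> bool" where
  "digitally_connected X adj \<longleftrightarrow>
     (\<forall>x\<in>X. \<forall>y\<in>X. (\<lambda>u v. u \<in> X \<and> v \<in> X \<and> adj u v)\<^sup>*\<^sup>* x y)"

definition NP1_adj :: "('a \<Rightarrow> 'a \<Rightarrow> bool) \<Rightarrow> ('b \<Rightarrow> 'b \<Rightarrow> bool) \<Rightarrow> ('a \<times> 'b) \<Rightarrow> ('a \<times> 'b) \<Rightarrow> bool" where
  "NP1_adj adjA adjB p q \<longleftrightarrow>
     (fst p = fst q \<and> adjB (snd p) (snd q)) \<or> (snd p = snd q \<and> adjA (fst p) (fst q))"

definition NP1_digital_topological_group :: "('a, 'b) monoid_scheme \<Rightarrow> ('a \<Rightarrow> 'a \<Rightarrow> bool) \<Rightarrow> bool" where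
  "NP1_digital_topological_group G adj \<longleftrightarrow>
     group G \<and> digital_image (carrier G) adj
     \<and> digitally_continuous (carrier G \<times> carrier G) (NP1_adj adj adj) (carrier G) adj
          (\<lambda>p. fst p \<otimes>\<^bsub>G\<^esub> snd p)
     \<and> digitally_continuous (carrier G) adj (carrier G) adj (\<lambda>x. inv\<^bsub>G\<^esub> x)"

definition cayley_adj :: "('a, 'b) monoid_scheme \<Rightarrow> 'a set \<Rightarrow> 'a \<Rightarrow> 'a \<Rightarrow> bool" where
  "cayley_adj G S a b \<longleftrightarrow>
     a \<otimes>\<^bsub>G\<^esub> inv\<^bsub>G\<^esub> b \<in> S \<or> b \<otimes>\<^bsub>G\<^esub> inv\<^bsub>G\<^esub> a \<in> S"

end

theory Submission
  imports Defs
begin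

theorem theoremA:
  fixes G :: "('a, 'b) monoid_scheme" and adj :: "'a \<Rightarrow> 'a \<Rightarrow> bool" and S :: "'a set"
  assumes "NP1_digital_topological_group G adj"
    and "digitally_connected (carrier G) adj"
    and "S = {x \<in> carrier G. adj \<one>\<^bsub>G\<^esub> x}"
  shows "generate G S = carrier G \<and>
         (\<forall>a\<in>carrier G. \<forall>b\<in>carrier G. adj a b \<longleftrightarrow> cayley_adj G S a b)"
proof -
  have grp: "group G" using assms(1) unfolding NP1_digital_topological_group_def by simp
  have sym: "\<And>x y. x \<in> carrier G \<Longrightarrow> y \<in> carrier G \<Longrightarrow> adj x y \<Longrightarrow> adj y x"
    using assms(1) unfolding NP1_digital_topological_group_def digital_image_def by blast
  have mc: "\<forall>p\<in>carrier G \<times> carrier G. \<forall>q\<in>carrier G \<times> carrier G.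
      NP1_adj adj adj p q \<longrightarrow> adj (fst p \<otimes>\<^bsub>G\<^esub> snd p) (fst q \<otimes>\<^bsub>G\<^esub> snd q)"
    using assms(1) unfolding NP1_digital_topological_group_def digitally_continuous_def by blast
  have rt: "\<And>a b c. a \<in> carrier G \<Longrightarrow> b \<in> carrier G \<Longrightarrow> c \<in> carrier G \<Longrightarrow> adj a b
      \<Longrightarrow> adj (a \<otimes>\<^bsub>G\<^esub> c) (b \<otimes>\<^bsub>G\<^esub> c)"
  proof -
    fix a b c assume h: "a \<in> carrier G" "b \<in> carrier G" "c \<in> carrier G" "adj a b"
    have "NP1_adj adj adj (a, c) (b, c)" using h(4) unfolding NP1_adj_def by simp
    thus "adj (a \<otimes>\<^bsub>G\<^esub> c) (b \<otimes>\<^bsub>G\<^esub> c)" using mc h by fastforce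
  qed
  have key: "\<And>a b. a \<in> carrier G \<Longrightarrow> b \<in> carrier G \<Longrightarrow> adj a b \<Longrightarrow>
      a \<otimes>\<^bsub>G\<^esub> inv\<^bsub>G\<^esub> b \<in> S \<and> b \<otimes>\<^bsub>G\<^esub> inv\<^bsub>G\<^esub> a \<in> S"
  proof -
    fix a b assume h: "a \<in> carrier G" "b \<in> carrier G" "adj a b"
    have ib: "inv\<^bsub>G\<^esub> b \<in> carrier G" "inv\<^bsub>G\<^esub> a \<in> carrier G"
      using h grp by (auto intro: group.inv_closed)
    have "adj (a \<otimes>\<^bsub>G\<^esub> inv\<^bsub>G\<^esub> b) (b \<otimes>\<^bsub>G\<^esub> inv\<^bsub>G\<^esub> b)" using rt h ib by blast
    hence 1: "adj (a \<otimes>\<^bsub>G\<^esub> inv\<^bsub>G\<^esub> b) \<one>\<^bsub>G\<^esub>" using grp h by (simp add: group.r_inv)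
    have "adj (b \<otimes>\<^bsub>G\<^esub> inv\<^bsub>G\<^esub> a) (a \<otimes>\<^bsub>G\<^esub> inv\<^bsub>G\<^esub> a)" using rt h ib sym by blast
    hence 2: "adj (b \<otimes>\<^bsub>G\<^esub> inv\<^bsub>G\<^esub> a) \<one>\<^bsub>G\<^esub>" using grp h by (simp add: group.r_inv)
    have c: "a \<otimes>\<^bsub>G\<^esub> inv\<^bsub>G\<^esub> b \<in> carrier G" "b \<otimes>\<^bsub>G\<^esub> inv\<^bsub>G\<^esub> a \<in> carrier G"
      using h ib grp by (auto intro: monoid.m_closed group.is_monoid)
    have one: "\<one>\<^bsub>G\<^esub> \<in> carrier G" using grp by (simp add: monoid.one_closed group.is_monoid)
    show "a \<otimes>\<^bsub>G\<^esub> inv\<^bsub>G\<^esub> b \<in> S \<and> b \<otimes>\<^bsub>G\<^esub> inv\<^bsub>G\<^esub> a \<in> S"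
      using 1 2 c one sym assms(3) by blast
  qed
  have bck: "\<And>a b. a \<in> carrier G \<Longrightarrow> b \<in> carrier G \<Longrightarrow> a \<otimes>\<^bsub>G\<^esub> inv\<^bsub>G\<^esub> b \<in> S \<Longrightarrow> adj a b"
  proof -
    fix a b assume h: "a \<in> carrier G" "b \<in> carrier G" "a \<otimes>\<^bsub>G\<^esub> inv\<^bsub>G\<^esub> b \<in> S"
    have one: "\<one>\<^bsub>G\<^esub> \<in> carrier G" using grp by (simp add: monoid.one_closed group.is_monoid)
    have "adj (\<one>\<^bsub>G\<^esub> \<otimes>\<^bsub>G\<^esub> b) ((a \<otimes>\<^bsub>G\<^esub> inv\<^bsub>G\<^esub> b) \<otimes>\<^bsub>G\<^esub> b)"
      using rt[OF one _ h(2)] h assms(3) by blast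
    moreover have "(a \<otimes>\<^bsub>G\<^esub> inv\<^bsub>G\<^esub> b) \<otimes>\<^bsub>G\<^esub> b = a" using grp h
      by (simp add: monoid.m_assoc group.is_monoid group.inv_closed group.l_inv monoid.r_one)
    ultimately have "adj b a" using grp h by (simp add: group.is_monoid monoid.l_one)
    thus "adj a b" using sym h by blast
  qed
  have part2: "\<forall>a\<in>carrier G. \<forall>b\<in>carrier G. adj a b \<longleftrightarrow> cayley_adj G S a b"
    unfolding cayley_adj_def using key bck sym by blast
  have sub: "S \<subseteq> carrier G" using assms(3) by blast
  have "carrier G \<subseteq> generate G S"
  proof
    fix x assume x: "x \<in> carrier G"
    have one: "\<one>\<^bsub>G\<^esub> \<in> carrier G" using grp by (simp add: monoid.one_closed group.is_monoid)
    have "(\<lambda>u v. u \<in> carrier G \<and> v \<in> carrier G \<and> adj u v)\<^sup>*\<^sup>* \<one>\<^bsub>G\<^esub> x"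
      using assms(2) x one unfolding digitally_connected_def by blast
    thus "x \<in> generate G S"
    proof (induction rule: rtranclp_induct)
      case base then show ?case by (rule generate.one)
    next
      case (step y z)
      then have h: "y \<in> carrier G" "z \<in> carrier G" "adj y z" by auto
      have "z \<otimes>\<^bsub>G\<^esub> inv\<^bsub>G\<^esub> y \<in> S" using key[OF h] by blast
      hence "(z \<otimes>\<^bsub>G\<^esub> inv\<^bsub>G\<^esub> y) \<otimes>\<^bsub>G\<^esub> y \<in> generate G S"
        using step.IH by (blast intro: generate.eng generate.incl)
      moreover have "(z \<otimes>\<^bsub>G\<^esub> inv\<^bsub>G\<^esub> y) \<otimes>\<^bsub>G\<^esub> y = z" using grp h
        by (simp add: monoid.m_assoc group.is_monoid group.inv_closed group.l_inv monoid.r_one)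
      ultimately show ?case by simp
    qed
  qed
  moreover have "generate G S \<subseteq> carrier G" using group.generate_in_carrier[OF grp sub] by blast
  ultimately show ?thesis using part2 by blast
qed

end
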